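(* Let $v:=u_3-u_0$. There is a constant $C>0$ such that for every point $p=(z,y)\in X$ with $0<y\le 1$ and every $0<r\le y/4$, writing $B_r$ for the ball of radius $r$ centered at $p$, $$\int_{B_r}|\nabla v|^2\le C\, r\, y^2 .$$
   Context: $X=\mathbb{R}^2\times(0,+\infty)$ with coordinates $(x_1,x_2,y)$, $z=x_1+ix_2$, $R=\sqrt{|z|^2+y^2}$, $\Delta=\partial_1^2+\partial_2^2+\partial_y^2$. $P(z)$ is a non-zero complex polynomial of degree $N$; $( * )$ is $\Delta u+e^{-2u}|P(z)|^2=0$. $u_0$ is a smooth solution of $( * )$ with $\sup_X ye^{-u_0}|P|<\infty$ and $|u_0-N\ln R-\ln y|\le K$ for $R\ge R_0$. With $C_0\ge\max\{1,\sup_X y^2e^{-2u_0}|P|^2\}$ fixed, $f_{C_0}(y)=0$ for $y\le C_0$, $f_{C_0}(y)=y-C_0\ln(y/C_0)-C_0$ for $y\ge C_0$. Let $\mathcal U$ be the set of continuous weak sub-solutions $v$ of $( * )$ (i.e. $\int_X(-v\Delta\phi-e^{-2v}|P|^2\phi)\le0$ for all non-negative compactly supported smooth $\phi$) with $v\le u_0+y$ on $X$, and $u_3=\sup\mathcal U$ pointwise. It is known that $u_3$ is a smooth solution of $( * )$ with $u_0+f_{C_0}(y)\le u_3\le u_0+y$. *)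

theory Defs
  imports "HOL-Analysis.Analysis" "HOL-Computational_Algebra.Polynomial"
begin

text \<open>Points of R^3 are vectors p :: real^3 with p$1 = x1, p$2 = x2, p$3 = y.\<close>

definition halfspace :: "(real^3) set" where
  "halfspace = {p. p $ 3 > 0}"

definition zc :: "real^3 \<Rightarrow> complex" where
  "zc p = Complex (p $ 1) (p $ 2)"

definition Rad :: "real^3 \<Rightarrow> real" where
  "Rad p = sqrt ((cmod (zc p))^2 + (p $ 3)^2)"

definition dpart :: "real^3 \<Rightarrow> (real^3 \<Rightarrow> real) \<Rightarrow> real^3 \<Rightarrow> real" where
  "dpart i f = (\<lambda>x. frechet_derivative f (at x) i)"

definition smooth_on :: "(real^3) set \<Rightarrow> (real^3 \<Rightarrow> real) \<Rightarrow> bool" where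
  "smooth_on S f \<longleftrightarrow> (\<forall>is. set is \<subseteq> Basis \<longrightarrow>
      (foldr dpart is f) differentiable_on S \<and> continuous_on S (foldr dpart is f))"

definition laplacian :: "(real^3 \<Rightarrow> real) \<Rightarrow> real^3 \<Rightarrow> real" where
  "laplacian f x = (\<Sum>i\<in>Basis. dpart i (dpart i f) x)"

definition grad_sq :: "(real^3 \<Rightarrow> real) \<Rightarrow> real^3 \<Rightarrow> real" where
  "grad_sq f x = (\<Sum>i\<in>Basis. (dpart i f x)^2)"

definition smooth_solution :: "complex poly \<Rightarrow> (real^3 \<Rightarrow> real) \<Rightarrow> bool" where
  "smooth_solution P u \<longleftrightarrow> smooth_on halfspace u \<and>
     (\<forall>x\<in>halfspace. laplacian u x + exp (-2 * u x) * (cmod (poly P (zc x)))^2 = 0)"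

definition test_fun :: "(real^3 \<Rightarrow> real) \<Rightarrow> bool" where
  "test_fun \<phi> \<longleftrightarrow> smooth_on UNIV \<phi> \<and> (\<forall>x. \<phi> x \<ge> 0) \<and>
     compact (closure {x. \<phi> x \<noteq> 0}) \<and> closure {x. \<phi> x \<noteq> 0} \<subseteq> halfspace"

definition weak_subsolution :: "complex poly \<Rightarrow> (real^3 \<Rightarrow> real) \<Rightarrow> bool" where
  "weak_subsolution P v \<longleftrightarrow> continuous_on halfspace v \<and>
     (\<forall>\<phi>. test_fun \<phi> \<longrightarrow>
        integral halfspace (\<lambda>x. - v x * laplacian \<phi> x
            - exp (-2 * v x) * (cmod (poly P (zc x)))^2 * \<phi> x) \<le> 0)"

definition fC :: "real \<Rightarrow> real \<Rightarrow> real" where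
  "fC C0 y = (if y \<le> C0 then 0 else y - C0 * ln (y / C0) - C0)"

definition subsol_class :: "complex poly \<Rightarrow> (real^3 \<Rightarrow> real) \<Rightarrow> (real^3 \<Rightarrow> real) set" where
  "subsol_class P u0 = {v. weak_subsolution P v \<and> (\<forall>x\<in>halfspace. v x \<le> u0 x + x $ 3)}"

definition u3 :: "complex poly \<Rightarrow> (real^3 \<Rightarrow> real) \<Rightarrow> real^3 \<Rightarrow> real" where
  "u3 P u0 x = (SUP v\<in>subsol_class P u0. v x)"

end

theory Submission
  imports Defs
begin


lemma box_shift:
  fixes x a b c :: "'a::euclidean_space"
  assumes "x \<in> cbox a b" "norm c \<le> m"
  shows "x + c \<in> cbox (a - m *\<^sub>R One) (b + m *\<^sub>R One)"
proof -
  have "\<bar>c \<bullet> i\<bar> \<le> m" if "i \<in> Basis" for i using Basis_le_norm[OF that, of c] assms(2) by linarith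
  then show ?thesis using assms(1) by (force simp: mem_box inner_add_left inner_diff_left)
qed

lemma box_shift_inv:
  fixes x a b c :: "'a::euclidean_space"
  assumes "x \<in> cbox a b" "norm c \<le> m"
  shows "x \<in> cbox (a - m *\<^sub>R One + c) (b + m *\<^sub>R One + c)"
proof -
  have "\<bar>c \<bullet> i\<bar> \<le> m" if "i \<in> Basis" for i using Basis_le_norm[OF that, of c] assms(2) by linarith
  then show ?thesis using assms(1) by (force simp: mem_box inner_add_left inner_diff_left)
qed

lemma box_mono_m:
  fixes a b :: "'a::euclidean_space"
  assumes "0 \<le> m1" "m1 \<le> m2"
  shows "cbox (a - m1 *\<^sub>R One) (b + m1 *\<^sub>R One) \<subseteq> cbox (a - m2 *\<^sub>R One) (b + m2 *\<^sub>R One)"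
  using assms by (force simp: mem_box inner_add_left inner_diff_left)

lemma lemA:
  fixes F G :: "'a::euclidean_space \<Rightarrow> real" and a b e :: 'a and m :: real
  assumes m: "m > 0" and e: "norm e \<le> 1"
    and cF: "continuous_on (cbox (a - m *\<^sub>R One) (b + m *\<^sub>R One)) F"
    and cG: "continuous_on (cbox (a - m *\<^sub>R One) (b + m *\<^sub>R One)) G"
    and z: "\<And>x. x \<in> cbox (a - m *\<^sub>R One) (b + m *\<^sub>R One) \<Longrightarrow> x \<notin> cbox a b \<Longrightarrow> F x = 0 \<and> G x = 0"
    and d: "\<And>y. y \<in> cbox (a - m *\<^sub>R One) (b + m *\<^sub>R One) \<Longrightarrow> ((\<lambda>s. F (y + s *\<^sub>R e)) has_real_derivative G y) (at 0)"
  shows "integral (cbox a b) G = 0"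
proof -
  define W where "W = cbox (a - m *\<^sub>R One) (b + m *\<^sub>R One)"
  define A where "A = a - (m/2) *\<^sub>R One"
  define B where "B = b + (m/2) *\<^sub>R One"
  define L where "L = cbox A B"
  have LW: "L \<subseteq> W" unfolding L_def A_def B_def W_def by (rule box_mono_m) (use m in auto)
  have abL: "cbox a b \<subseteq> L" unfolding L_def A_def B_def using box_mono_m[of 0 "m/2" a b] m by simp
  have shiftW: "x + t *\<^sub>R e \<in> W" if "x \<in> L" "\<bar>t\<bar> \<le> m/2" for x t
  proof -
    have "norm (t *\<^sub>R e) \<le> m/2" using e that(2) by (simp add: mult_le_one) (smt (verit) mult_left_le norm_ge_zero)
    from box_shift[OF that(1)[unfolded L_def] this] show ?thesis
      unfolding W_def A_def B_def
      by (simp add: algebra_simps flip: scaleR_add_left)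
  qed
  have cGL: "continuous_on L G" using cG LW W_def continuous_on_subset by blast
  have cFL: "continuous_on L F" using cF LW W_def continuous_on_subset by blast
  have GintL: "G integrable_on L" unfolding L_def using cGL L_def integrable_continuous by blast
  have zL: "F x = 0 \<and> G x = 0" if "x \<in> W" "x \<notin> cbox a b" for x using z that W_def by blast
  define I where "I = integral (cbox a b) F"
  have Fab: "(F has_integral I) (cbox a b)" unfolding I_def
    by (rule integrable_integral, rule integrable_continuous, rule continuous_on_subset[OF cFL abL])
  have Fbox: "(F has_integral I) T" if "cbox a b \<subseteq> T" "T \<subseteq> W" for T
  proof -
    define F' where "F' = (\<lambda>x. if x \<in> cbox a b then F x else 0)"
    have "(F' has_integral I) (cbox a b)" using Fab by (rule has_integral_eq[rotated]) (simp add: F'_def)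
    then have "(F' has_integral I) T" by (rule has_integral_on_superset) (use that in \<open>auto simp: F'_def\<close>)
    then show ?thesis by (rule has_integral_eq[rotated]) (use that zL in \<open>auto simp: F'_def\<close>)
  qed
  have key: "\<bar>integral L G\<bar> \<le> \<epsilon> * measure lborel L" if eps: "\<epsilon> > 0" for \<epsilon>
  proof -
    have "uniformly_continuous_on W G" unfolding W_def by (rule compact_uniformly_continuous[OF cG compact_cbox])
    then obtain \<delta> where \<delta>: "\<delta> > 0" "\<And>x x'. x \<in> W \<Longrightarrow> x' \<in> W \<Longrightarrow> dist x' x < \<delta> \<Longrightarrow> dist (G x') (G x) < \<epsilon>"
      unfolding uniformly_continuous_on_def using eps by metis
    define h where "h = min (\<delta>/2) (m/2)"
    have h: "0 < h" "h \<le> m/2" "h < \<delta>" using \<delta> m by (auto simp: h_def)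
    define c where "c = h *\<^sub>R e"
    have nc: "norm c \<le> m/2" using e h by (simp add: c_def) (smt (verit) mult_left_le)
    have Tsub: "cbox (A + c) (B + c) \<subseteq> W"
    proof
      fix x assume "x \<in> cbox (A + c) (B + c)"
      then have "x - c \<in> L" unfolding L_def by (force simp: mem_box inner_add_left inner_diff_left)
      from shiftW[OF this, of h] h show "x \<in> W" by (simp add: c_def)
    qed
    have Tsup: "cbox a b \<subseteq> cbox (A + c) (B + c)"
      using box_shift_inv[OF _ nc] unfolding A_def B_def by auto
    have "(F has_integral I) (cbox (A + c) (B + c))" by (rule Fbox[OF Tsup Tsub])
    then have sh: "((\<lambda>x. F (c + x)) has_integral I) L"
      using has_integral_shift_cbox_iff[of F c I A B] unfolding L_def by (simp add: o_def)
    have FL: "(F has_integral I) L" by (rule Fbox[OF abL LW])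
    define DQ where "DQ = (\<lambda>x. (F (c + x) - F x) / h)"
    have DQ0: "(DQ has_integral 0) L"
    proof -
      have "((\<lambda>x. (1/h) * (F (c + x) - F x)) has_integral (1/h) * (I - I)) L"
        by (rule has_integral_mult_right[OF has_integral_diff[OF sh FL]])
      then show ?thesis by (simp add: DQ_def)
    qed
    have bound: "norm (G x - DQ x) \<le> \<epsilon>" if xL: "x \<in> L" for x
    proof -
      have der: "DERIV (\<lambda>s. F (x + s *\<^sub>R e)) t :> G (x + t *\<^sub>R e)" if "0 \<le> t" "t \<le> h" for t
      proof -
        have yW: "x + t *\<^sub>R e \<in> W" using shiftW[OF xL, of t] that h by auto
        have "((\<lambda>s. F ((x + t *\<^sub>R e) + s *\<^sub>R e)) has_real_derivative G (x + t *\<^sub>R e)) (at 0)"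
          using d yW W_def by blast
        then have "((\<lambda>s. F (x + (s + t) *\<^sub>R e)) has_real_derivative G (x + t *\<^sub>R e)) (at 0)"
          by (simp add: algebra_simps scaleR_add_left)
        then show ?thesis using DERIV_shift[of "\<lambda>s. F (x + s *\<^sub>R e)" _ 0 t] by simp
      qed
      obtain z where zz: "0 < z" "z < h" "F (x + h *\<^sub>R e) - F (x + 0 *\<^sub>R e) = (h - 0) * G (x + z *\<^sub>R e)"
        using MVT2[OF h(1), of "\<lambda>s. F (x + s *\<^sub>R e)" "\<lambda>t. G (x + t *\<^sub>R e)"] der by auto
      have "DQ x = G (x + z *\<^sub>R e)" using zz h unfolding DQ_def c_def by (simp add: add.commute)
      moreover have "dist (G (x + z *\<^sub>R e)) (G x) < \<epsilon>"
      proof (rule \<delta>(2))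
        show "x \<in> W" using LW xL by auto
        show "x + z *\<^sub>R e \<in> W" using shiftW[OF xL, of z] zz h by auto
        have "z * norm e \<le> z" using e zz by (simp add: mult_left_le)
        then have "z * norm e < \<delta>" using zz h by linarith
        then show "dist (x + z *\<^sub>R e) x < \<delta>" using zz by (simp add: dist_norm)
      qed
      ultimately show ?thesis by (simp add: dist_norm norm_minus_commute)
    qed
    have DQint: "DQ integrable_on L" using DQ0 by blast
    have "((\<lambda>x. G x - DQ x) has_integral (integral L G - 0)) L"
      by (rule has_integral_diff[OF integrable_integral[OF GintL] DQ0])
    from has_integral_bound[OF _ this[unfolded L_def] bound[unfolded L_def]] eps
    show ?thesis unfolding L_def by simp
  qed
  have IL0: "integral L G = 0"
  proof (rule ccontr)
    assume ne: "integral L G \<noteq> 0"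
    define \<epsilon> where "\<epsilon> = \<bar>integral L G\<bar> / (2 * (measure lborel L + 1))"
    have cL: "measure lborel L \<ge> 0" by simp
    have c2: "2 * (measure lborel L + 1) > 0" by (smt (verit) measure_nonneg)
    have "\<epsilon> > 0" unfolding \<epsilon>_def using ne by (intro divide_pos_pos c2) auto
    from key[OF this] have "\<bar>integral L G\<bar> \<le> \<bar>integral L G\<bar> * (measure lborel L / (2 * (measure lborel L + 1)))"
      by (simp add: \<epsilon>_def)
    moreover have "measure lborel L / (2 * (measure lborel L + 1)) < 1"
      by (subst divide_less_eq_1_pos[OF c2]) (smt (verit) measure_nonneg)
    ultimately show False using ne
      by (smt (verit) mult_strict_left_mono[of "measure lborel L / (2 * (measure lborel L + 1))" 1 "\<bar>integral L G\<bar>"] zero_less_abs_iff mult_1_right)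
  qed
  have "integral L G = integral L (\<lambda>x. if x \<in> cbox a b then G x else 0)"
    by (rule integral_cong) (use zL LW in auto)
  also have "\<dots> = integral (cbox a b) G" using abL by (simp add: integral_restrict_Int Int_absorb2)
  finally show ?thesis using IL0 by simp
qed



lemma deriv_maxpow:
  assumes n: "n \<ge> 2"
  shows "((\<lambda>t::real. (max 0 t)^n) has_real_derivative (real n * (max 0 t)^(n-1))) (at t)"
proof (cases "t = 0")
  case True
  have lim: "((\<lambda>h. ((max 0 (0 + h))^n - (max 0 0)^n) / h) \<longlongrightarrow> 0) (at (0::real))"
  proof (rule Lim_null_comparison)
    show "\<forall>\<^sub>F h in at 0. norm (((max 0 (0 + h))^n - (max 0 0)^n) / h) \<le> \<bar>h\<bar>"
    proof -
      have bnd: "norm (((max 0 (0 + h))^n - (max 0 0)^n) / h) \<le> \<bar>h\<bar>" if "\<bar>h\<bar> < 1" "h \<noteq> 0" for h :: real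
      proof -
        have m: "\<bar>max 0 h\<bar> \<le> \<bar>h\<bar>" by auto
        have "\<bar>max 0 h\<bar>^n \<le> \<bar>h\<bar>^n" using m by (simp add: power_mono)
        also have "\<bar>h\<bar>^n \<le> \<bar>h\<bar>^2" using power_decreasing[of 2 n "\<bar>h\<bar>"] that n by simp
        finally have "\<bar>(max 0 h)^n\<bar> \<le> \<bar>h\<bar> * \<bar>h\<bar>" by (simp add: power_abs power2_eq_square)
        then show ?thesis using that n by (simp add: abs_divide divide_le_eq power_0_left)
      qed
      have ev: "\<forall>\<^sub>F h in at (0::real). \<bar>h\<bar> < 1 \<and> h \<noteq> 0"
        unfolding eventually_at by (rule exI[of _ 1]) (auto simp: dist_norm)
      show ?thesis using ev by (rule eventually_mono) (use bnd in blast)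
    qed
    show "((\<lambda>h::real. \<bar>h\<bar>) \<longlongrightarrow> 0) (at 0)"
      using tendsto_rabs[OF tendsto_ident_at, of "0::real" UNIV] by simp
  qed
  then show ?thesis using True n by (simp add: DERIV_def power_0_left)
next
  case False
  show ?thesis
  proof (cases "t > 0")
    case True
    have d: "((\<lambda>t::real. t^n) has_real_derivative (real n * t^(n - Suc 0))) (at t)"
      by (rule DERIV_pow)
    have e: "(max 0 t)^(n-1) = t^(n - Suc 0)" using True by simp
    have "((\<lambda>t::real. (max 0 t)^n) has_real_derivative (real n * t^(n - Suc 0))) (at t)"
    proof (rule has_field_derivative_transform_within_open[OF d])
      show "open {0::real<..}" by simp
      show "t \<in> {0<..}" using True by simp
      show "x ^ n = (max 0 x)^n" if "x \<in> {0<..}" for x :: real using that by (simp add: max_absorb2 less_imp_le)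
    qed
    then show ?thesis by (simp only: e)
  next
    case False
    with \<open>t \<noteq> 0\<close> have t: "t < 0" by simp
    have d: "((\<lambda>t::real. 0) has_real_derivative 0) (at t)" by (rule DERIV_const)
    have d0: "((\<lambda>t::real. (max 0 t)^n) has_real_derivative 0) (at t)"
    proof (rule has_field_derivative_transform_within_open[OF d])
      show "open {..<0::real}" by simp
      show "t \<in> {..<0}" using t by simp
      show "0 = (max 0 x)^n" if "x \<in> {..<0}" for x :: real using that n by (simp add: max_def)
    qed
    have z: "real n * (max 0 t)^(n-1) = 0" using t n by (simp add: max_def)
    show ?thesis by (rule DERIV_cong[OF d0 z[symmetric]])
  qed
qed

lemma line_deriv:
  fixes f :: "'a::euclidean_space \<Rightarrow> real"
  assumes "f differentiable (at y)"
  shows "((\<lambda>s. f (y + s *\<^sub>R e)) has_real_derivative frechet_derivative f (at y) e) (at 0)"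
proof -
  have D: "(f has_derivative frechet_derivative f (at y)) (at (y + 0 *\<^sub>R e))"
    using frechet_derivative_works[THEN iffD1, OF assms] by simp
  have lin: "((\<lambda>s::real. y + s *\<^sub>R e) has_derivative (\<lambda>s. s *\<^sub>R e)) (at 0)"
    by (auto intro!: derivative_eq_intros)
  have "((\<lambda>s. f (y + s *\<^sub>R e)) has_derivative (\<lambda>s. frechet_derivative f (at y) (s *\<^sub>R e))) (at 0)"
    using has_derivative_compose[OF lin D] by simp
  moreover have "linear (frechet_derivative f (at y))"
    using D has_derivative_linear by simp
  ultimately have "((\<lambda>s. f (y + s *\<^sub>R e)) has_derivative (\<lambda>s. s * frechet_derivative f (at y) e)) (at 0)"
    by (simp add: linear_scale)
  moreover have "(\<lambda>s. s * frechet_derivative f (at y) e) = (*) (frechet_derivative f (at y) e)"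
    by (rule ext) simp
  ultimately show ?thesis
    unfolding has_field_derivative_def by simp
qed



lemma eta_line:
  fixes p y i :: "'a::euclidean_space" and r :: real
  assumes i: "i \<in> Basis"
  defines "sp \<equiv> \<lambda>x. max 0 (4*r^2 - norm (x-p)^2)"
  shows "((\<lambda>s. sp (y + s*\<^sub>R i)^3 / r^6) has_real_derivative (-6 * sp y^2 * ((y-p)\<bullet>i) / r^6)) (at 0)"
    and "((\<lambda>s. -6 * sp (y + s*\<^sub>R i)^2 * ((y + s*\<^sub>R i - p)\<bullet>i) / r^6) has_real_derivative
            ((24 * sp y * ((y-p)\<bullet>i)^2 - 6 * sp y^2)/r^6)) (at 0)"
proof -
  define c where "c = (y-p)\<bullet>i"
  define N where "N = norm (y-p)^2"
  define q where "q = (\<lambda>t::real. 4*r^2 - (N + 2*t*c + t^2))"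
  have sqe: "norm (y + t*\<^sub>R i - p)^2 = N + 2*t*c + t^2" for t
  proof -
    have ii: "i \<bullet> i = 1" using i by (simp add: inner_Basis)
    have "y + t*\<^sub>R i - p = (y - p) + t *\<^sub>R i" by (simp add: algebra_simps)
    then have "norm (y + t*\<^sub>R i - p)^2 = ((y - p) + t *\<^sub>R i) \<bullet> ((y - p) + t *\<^sub>R i)"
      by (simp only: power2_norm_eq_inner)
    also have "\<dots> = (y-p)\<bullet>(y-p) + 2*t*((y-p)\<bullet>i) + t^2 * (i\<bullet>i)"
      by (simp add: inner_add_left inner_add_right inner_commute algebra_simps power2_eq_square)
    finally show ?thesis using ii unfolding N_def c_def by (simp add: power2_norm_eq_inner)
  qed
  have ce: "(y + t*\<^sub>R i - p)\<bullet>i = c + t" for t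
    using i unfolding c_def by (simp add: inner_add_left inner_diff_left algebra_simps)
  have spq: "sp (y + s*\<^sub>R i) = max 0 (q s)" for s unfolding sp_def q_def using sqe by simp
  have q0: "max 0 (q 0) = sp y" unfolding sp_def q_def N_def by simp
  have Dq: "(q has_real_derivative -2*c) (at 0)" unfolding q_def
    by (auto intro!: derivative_eq_intros)
  have D3: "((\<lambda>s. (max 0 (q s))^3) has_real_derivative (real 3 * (max 0 (q 0))^(3-1) * (-2*c))) (at 0)"
    by (rule DERIV_chain2[OF deriv_maxpow Dq]) simp
  have D3': "((\<lambda>s. (max 0 (q s))^3 / r^6) has_real_derivative (real 3 * (max 0 (q 0))^(3-1) * (-2*c)) / r^6) (at 0)"
    by (rule DERIV_cdivide[OF D3])
  show "((\<lambda>s. sp (y + s*\<^sub>R i)^3 / r^6) has_real_derivative (-6 * sp y^2 * ((y-p)\<bullet>i) / r^6)) (at 0)"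
    using D3' unfolding spq q0 c_def[symmetric] by (rule DERIV_cong) simp
  have D2: "((\<lambda>s. (max 0 (q s))^2) has_real_derivative (real 2 * (max 0 (q 0))^(2-1) * (-2*c))) (at 0)"
    by (rule DERIV_chain2[OF deriv_maxpow Dq]) simp
  have Dl: "((\<lambda>s. c + s) has_real_derivative 1) (at 0)" by (auto intro!: derivative_eq_intros)
  have D4: "((\<lambda>s. -6 * (max 0 (q s))^2 * (c + s) / r^6) has_real_derivative
      (-6 * ((real 2 * (max 0 (q 0))^(2-1) * (-2*c)) * (c + 0) + 1 * (max 0 (q 0))^2) / r^6)) (at 0)"
    using DERIV_cdivide[OF DERIV_cmult[OF DERIV_mult[OF D2 Dl]], of "-6" "r^6"]
    by (simp add: mult.assoc)
  show "((\<lambda>s. -6 * sp (y + s*\<^sub>R i)^2 * ((y + s*\<^sub>R i - p)\<bullet>i) / r^6) has_real_derivative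
            ((24 * sp y * ((y-p)\<bullet>i)^2 - 6 * sp y^2)/r^6)) (at 0)"
    using D4 unfolding spq ce q0 c_def[symmetric] by (rule DERIV_cong) (simp add: algebra_simps power2_eq_square)
qed

lemma smooth_facts:
  assumes "smooth_on S f" "open S" "i \<in> Basis"
  shows "continuous_on S f" "continuous_on S (dpart i f)" "continuous_on S (dpart i (dpart i f))"
    "\<And>x. x \<in> S \<Longrightarrow> f differentiable (at x)" "\<And>x. x \<in> S \<Longrightarrow> dpart i f differentiable (at x)"
proof -
  have s0: "f differentiable_on S \<and> continuous_on S f"
    using assms(1)[unfolded smooth_on_def, rule_format, of "[]"] by simp
  have s1: "dpart i f differentiable_on S \<and> continuous_on S (dpart i f)"
    using assms(1)[unfolded smooth_on_def, rule_format, of "[i]"] assms(3) by simp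
  have s2: "continuous_on S (dpart i (dpart i f))"
    using assms(1)[unfolded smooth_on_def, rule_format, of "[i,i]"] assms(3) by simp
  show "continuous_on S f" "continuous_on S (dpart i f)" "continuous_on S (dpart i (dpart i f))"
    using s0 s1 s2 by auto
  show "f differentiable (at x)" if "x \<in> S" for x
    using s0 that assms(2) differentiable_on_eq_differentiable_at by blast
  show "dpart i f differentiable (at x)" if "x \<in> S" for x
    using s1 that assms(2) differentiable_on_eq_differentiable_at by blast
qed

lemma dpart_diff:
  assumes "f differentiable (at x)" "g differentiable (at x)"
  shows "dpart i (\<lambda>x. f x - g x) x = dpart i f x - dpart i g x"
proof -
  have "((\<lambda>x. f x - g x) has_derivative (\<lambda>h. frechet_derivative f (at x) h - frechet_derivative g (at x) h)) (at x)"
    by (rule has_derivative_diff) (use assms frechet_derivative_works in auto)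
  from frechet_derivative_at[OF this] show ?thesis unfolding dpart_def by metis
qed

lemma ball_est:
  fixes P :: "complex poly" and U u0 :: "real^3 \<Rightarrow> real" and p :: "real^3" and r :: real
  assumes sU: "smooth_solution P U" and s0: "smooth_solution P u0"
    and bnd: "\<forall>x\<in>halfspace. u0 x \<le> U x \<and> U x \<le> u0 x + x$3"
    and p: "p \<in> halfspace" and r: "0 < r" "r \<le> p$3/4"
  shows "integral (ball p r) (grad_sq (\<lambda>x. U x - u0 x)) \<le> 1024 * r * (p$3)^2"
proof -
  define H where "H = (halfspace :: (real^3) set)"
  have oH: "open H" unfolding H_def halfspace_def by (rule open_halfspace_component_gt_cart)
  have smU: "smooth_on H U" and solU: "\<forall>x\<in>H. laplacian U x + exp (-2 * U x) * (cmod (poly P (zc x)))^2 = 0"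
    using sU unfolding smooth_solution_def H_def by auto
  have sm0: "smooth_on H u0" and sol0: "\<forall>x\<in>H. laplacian u0 x + exp (-2 * u0 x) * (cmod (poly P (zc x)))^2 = 0"
    using s0 unfolding smooth_solution_def H_def by auto
  define e3 :: "real^3" where "e3 = axis 3 1"
  have e3B: "e3 \<in> Basis" unfolding e3_def by simp
  have comp: "x$3 = x \<bullet> e3" for x :: "real^3" by (simp add: e3_def cart_eq_inner_axis)
  define y0 where "y0 = p \<bullet> e3"
  have y0: "y0 > 0" "r \<le> y0/4" using p r by (auto simp: y0_def comp halfspace_def)
  define v where "v = (\<lambda>x. U x - u0 x)"
  define a where "a = (\<lambda>i x. dpart i U x - dpart i u0 x)"
  define b where "b = (\<lambda>i x. dpart i (dpart i U) x - dpart i (dpart i u0) x)"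
  define sp where "sp = (\<lambda>x. max 0 (4*r^2 - norm (x-p)^2))"
  define \<eta> where "\<eta> = (\<lambda>x. sp x^3 / r^6)"
  define \<eta>1 where "\<eta>1 = (\<lambda>i x. -6 * sp x^2 * ((x-p)\<bullet>i) / r^6)"
  define \<eta>2 where "\<eta>2 = (\<lambda>i x. (24 * sp x * ((x-p)\<bullet>i)^2 - 6 * sp x^2)/r^6)"
  define F where "F = (\<lambda>i x. \<eta> x * v x * a i x - v x * v x / 2 * \<eta>1 i x)"
  define G where "G = (\<lambda>i x. \<eta> x * (a i x * a i x) + \<eta> x * v x * b i x - v x * v x / 2 * \<eta>2 i x)"
  define lo where "lo = p - (2*r) *\<^sub>R One"
  define hi where "hi = p + (2*r) *\<^sub>R One"
  define S where "S = cbox lo hi"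
  define W where "W = cbox (lo - (r/2) *\<^sub>R One) (hi + (r/2) *\<^sub>R One)"
  have WH: "W \<subseteq> H"
  proof
    fix x assume "x \<in> W"
    then have "(lo - (r/2) *\<^sub>R One)\<bullet>e3 \<le> x\<bullet>e3" using e3B unfolding W_def mem_box by blast
    then have "x\<bullet>e3 > 0" using y0 r e3B by (simp add: lo_def inner_diff_left y0_def)
    then show "x \<in> H" by (simp add: H_def halfspace_def comp)
  qed
  have SW: "S \<subseteq> W" unfolding S_def W_def using box_mono_m[of 0 "r/2" lo hi] r by simp
  have Sup: "x\<bullet>e3 \<le> y0 + 2*r" if "x \<in> S" for x
  proof -
    have "x\<bullet>e3 \<le> hi\<bullet>e3" using that e3B unfolding S_def mem_box by blast
    then show ?thesis using e3B by (simp add: hi_def inner_add_left y0_def)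
  qed
  have ballS: "ball p r \<subseteq> S"
  proof
    fix x assume "x \<in> ball p r"
    then have n: "norm (x - p) < r" by (simp add: dist_norm norm_minus_commute)
    have "\<bar>(x - p)\<bullet>i\<bar> \<le> 2*r" if "i \<in> Basis" for i
      using Basis_le_norm[OF that, of "x-p"] n r by linarith
    then show "x \<in> S" unfolding S_def mem_box lo_def hi_def
      by (force simp: inner_diff_left inner_add_left abs_le_iff)
  qed
  have spS: "sp x = 0" if nS: "x \<notin> S" for x
  proof -
    obtain i where i: "i \<in> Basis" "\<not> (lo\<bullet>i \<le> x\<bullet>i \<and> x\<bullet>i \<le> hi\<bullet>i)"
      using nS unfolding S_def mem_box by blast
    then have "\<bar>(x - p)\<bullet>i\<bar> > 2*r" by (auto simp: lo_def hi_def inner_diff_left inner_add_left)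
    then have "norm (x - p) > 2*r" using Basis_le_norm[OF i(1), of "x-p"] by linarith
    then have "norm (x - p)^2 > (2*r)^2" using r by (intro power_strict_mono) auto
    then show ?thesis by (simp add: sp_def power_mult_distrib)
  qed
  note fU = smooth_facts[OF smU oH] and f0 = smooth_facts[OF sm0 oH]
  have cW: "continuous_on W U" "continuous_on W u0"
    "\<And>i. i \<in> Basis \<Longrightarrow> continuous_on W (dpart i U)" "\<And>i. i \<in> Basis \<Longrightarrow> continuous_on W (dpart i u0)"
    "\<And>i. i \<in> Basis \<Longrightarrow> continuous_on W (dpart i (dpart i U))" "\<And>i. i \<in> Basis \<Longrightarrow> continuous_on W (dpart i (dpart i u0))"
    using fU f0 continuous_on_subset[OF _ WH] e3B by blast+
  have vb: "0 \<le> v x" "v x \<le> x\<bullet>e3" if "x \<in> H" for x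
    using bnd that by (auto simp: v_def H_def comp)
  have lap: "0 \<le> (\<Sum>i\<in>Basis. b i x)" if "x \<in> H" for x
  proof -
    have "(\<Sum>i\<in>Basis. b i x) = laplacian U x - laplacian u0 x"
      by (simp add: b_def laplacian_def sum_subtractf)
    also have "\<dots> = exp (-2 * u0 x) * (cmod (poly P (zc x)))^2 - exp (-2 * U x) * (cmod (poly P (zc x)))^2"
      using solU sol0 that by (auto simp: algebra_simps)
    also have "\<dots> \<ge> 0"
    proof -
      have "u0 x \<le> U x" using bnd that by (auto simp: H_def)
      then have "exp (-2 * U x) \<le> exp (-2 * u0 x)" by simp
      then show ?thesis by (simp add: mult_right_mono)
    qed
    finally show ?thesis .
  qed
  have grad: "grad_sq v x = (\<Sum>i\<in>Basis. a i x * a i x)" if "x \<in> H" for x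
    unfolding grad_sq_def v_def a_def
    using dpart_diff[OF fU(4)[OF e3B that] f0(4)[OF e3B that]] by (simp add: power2_eq_square)
  have DF: "((\<lambda>s. F i (y + s *\<^sub>R i)) has_real_derivative G i y) (at 0)" if i: "i \<in> Basis" and y: "y \<in> W" for i y
  proof -
    have yH: "y \<in> H" using y WH by auto
    have Dv: "((\<lambda>s. v (y + s *\<^sub>R i)) has_real_derivative a i y) (at 0)"
      unfolding v_def a_def dpart_def
      by (rule DERIV_diff[OF line_deriv[OF fU(4)[OF i yH]] line_deriv[OF f0(4)[OF i yH]]])
    have Da: "((\<lambda>s. a i (y + s *\<^sub>R i)) has_real_derivative b i y) (at 0)"
      unfolding a_def b_def dpart_def[of i "dpart i U"] dpart_def[of i "dpart i u0"]
      by (rule DERIV_diff[OF line_deriv[OF fU(5)[OF i yH]] line_deriv[OF f0(5)[OF i yH]]])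
    have De: "((\<lambda>s. \<eta> (y + s *\<^sub>R i)) has_real_derivative \<eta>1 i y) (at 0)"
      using eta_line(1)[OF i, where p=p and y=y and r=r] unfolding \<eta>_def \<eta>1_def sp_def by simp
    have De1: "((\<lambda>s. \<eta>1 i (y + s *\<^sub>R i)) has_real_derivative \<eta>2 i y) (at 0)"
      using eta_line(2)[OF i, where p=p and y=y and r=r] unfolding \<eta>1_def \<eta>2_def sp_def by simp
    note X = DERIV_diff[OF DERIV_mult[OF DERIV_mult[OF De Dv] Da]
               DERIV_mult[OF DERIV_cdivide[OF DERIV_mult[OF Dv Dv], of 2] De1]]
    show ?thesis unfolding F_def using X
      by (rule DERIV_cong) (simp add: G_def algebra_simps)
  qed
  have csp: "continuous_on X sp" for X unfolding sp_def by (intro continuous_intros)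
  have cv: "continuous_on W v" unfolding v_def using cW by (intro continuous_intros) auto
  have ca: "continuous_on W (a i)" if "i \<in> Basis" for i
    unfolding a_def using cW that by (intro continuous_intros) auto
  have cb: "continuous_on W (b i)" if "i \<in> Basis" for i
    unfolding b_def using cW that by (intro continuous_intros) auto
  have ce: "continuous_on X \<eta>" "continuous_on X (\<eta>1 i)" "continuous_on X (\<eta>2 i)" for X i
    unfolding \<eta>_def \<eta>1_def \<eta>2_def using csp r by (auto intro!: continuous_intros)
  have cF: "continuous_on W (F i)" if "i \<in> Basis" for i
    unfolding F_def using cv ca[OF that] ce by (intro continuous_intros) auto
  have cG: "continuous_on W (G i)" if "i \<in> Basis" for i
    unfolding G_def using cv ca[OF that] cb[OF that] ce by (intro continuous_intros) auto
  have zFG: "F i x = 0 \<and> G i x = 0" if "x \<notin> S" for i x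
    using spS[OF that] by (simp add: F_def G_def \<eta>_def \<eta>1_def \<eta>2_def)
  have int0: "integral S (G i) = 0" if i: "i \<in> Basis" for i
    unfolding S_def
  proof (rule lemA[where F="F i" and e=i])
    show "0 < r/2" using r by simp
    show "norm i \<le> 1" using i by simp
    show "continuous_on (cbox (lo - (r/2) *\<^sub>R One) (hi + (r/2) *\<^sub>R One)) (F i)" using cF[OF i] W_def by simp
    show "continuous_on (cbox (lo - (r/2) *\<^sub>R One) (hi + (r/2) *\<^sub>R One)) (G i)" using cG[OF i] W_def by simp
    show "F i x = 0 \<and> G i x = 0" if "x \<in> cbox (lo - (r/2) *\<^sub>R One) (hi + (r/2) *\<^sub>R One)" "x \<notin> cbox lo hi" for x
      using zFG that S_def by blast
    show "((\<lambda>s. F i (y + s *\<^sub>R i)) has_real_derivative G i y) (at 0)"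
      if "y \<in> cbox (lo - (r/2) *\<^sub>R One) (hi + (r/2) *\<^sub>R One)" for y
      using DF[OF i] that W_def by blast
  qed
  have intG: "G i integrable_on S" if "i \<in> Basis" for i
    unfolding S_def by (rule integrable_continuous) (use continuous_on_subset[OF cG[OF that] SW] S_def in simp)
  have sum0: "integral S (\<lambda>x. \<Sum>i\<in>Basis. G i x) = 0"
    by (subst integral_sum) (use intG int0 in auto)
  define T1 where "T1 = (\<lambda>x. \<eta> x * (\<Sum>i\<in>Basis. a i x * a i x))"
  define T2 where "T2 = (\<lambda>x. \<eta> x * v x * (\<Sum>i\<in>Basis. b i x))"
  define T3 where "T3 = (\<lambda>x. v x * v x / 2 * (\<Sum>i\<in>Basis. \<eta>2 i x))"
  have sumG: "(\<Sum>i\<in>Basis. G i x) = T1 x + T2 x - T3 x" for x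
    by (simp add: G_def T1_def T2_def T3_def sum.distrib sum_subtractf sum_distrib_left)
  have cS: "continuous_on S f" if "continuous_on W f" for f using continuous_on_subset[OF that SW] .
  have iT1: "T1 integrable_on S" unfolding S_def
    by (rule integrable_continuous, rule cS[unfolded S_def]) (unfold T1_def, use ce ca in \<open>auto intro!: continuous_intros\<close>)
  have iT2: "T2 integrable_on S" unfolding S_def
    by (rule integrable_continuous, rule cS[unfolded S_def]) (unfold T2_def, use ce cb cv in \<open>auto intro!: continuous_intros\<close>)
  have iT3: "T3 integrable_on S" unfolding S_def
    by (rule integrable_continuous, rule cS[unfolded S_def]) (unfold T3_def, use ce cv in \<open>auto intro!: continuous_intros\<close>)
  have "integral S (\<lambda>x. T1 x + T2 x - T3 x) = integral S T1 + integral S T2 - integral S T3"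
    using iT1 iT2 iT3 by (simp add: integral_add integral_diff integrable_add)
  moreover have "integral S (\<lambda>x. T1 x + T2 x - T3 x) = 0" using sum0 sumG by simp
  ultimately have I1: "integral S T1 = integral S T3 - integral S T2" by linarith
  have T2nn: "0 \<le> integral S T2"
  proof (rule integral_nonneg[OF iT2])
    fix x assume "x \<in> S"
    then have xH: "x \<in> H" using SW WH by auto
    have "0 \<le> \<eta> x" by (simp add: \<eta>_def sp_def)
    then show "0 \<le> T2 x" unfolding T2_def using vb(1)[OF xH] lap[OF xH] by simp
  qed
  define M where "M = 432 * y0^2 / r^2"
  have T3le: "T3 x \<le> M" if xS: "x \<in> S" for x
  proof -
    have xH: "x \<in> H" using xS SW WH by auto
    have v0: "0 \<le> v x" and v1: "v x \<le> 3/2 * y0" using vb[OF xH] Sup[OF xS] y0 by auto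
    have vv: "v x * v x / 2 \<le> 9/8 * y0^2"
      using mult_mono[OF v1 v1] v0 y0 by (simp add: power2_eq_square)
    define N where "N = norm (x - p)^2"
    have Nsum: "(\<Sum>i\<in>Basis. ((x-p)\<bullet>i)^2) = N"
      unfolding N_def power2_norm_eq_inner by (subst euclidean_inner) (simp add: power2_eq_square)
    have sumE: "(\<Sum>i\<in>Basis. \<eta>2 i x) = (24 * sp x * N - 18 * sp x^2) / r^6"
    proof -
      have "(\<Sum>i\<in>Basis. \<eta>2 i x) = (\<Sum>i\<in>Basis. 24 * sp x * ((x-p)\<bullet>i)^2 - 6 * sp x^2) / r^6"
        unfolding \<eta>2_def by (simp add: sum_divide_distrib)
      also have "\<dots> = (24 * sp x * N - 18 * sp x^2) / r^6"
        by (simp add: sum_subtractf sum_distrib_left[symmetric] Nsum)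
      finally show ?thesis .
    qed
    have Ebound: "(\<Sum>i\<in>Basis. \<eta>2 i x) \<le> 384 / r^2"
    proof (cases "sp x = 0")
      case True then show ?thesis using r by (simp add: sumE)
    next
      case False
      then have spx: "sp x = 4*r^2 - N" "4*r^2 - N > 0" unfolding sp_def N_def by (auto simp: max_def split: if_splits)
      have N0: "0 \<le> N" by (simp add: N_def)
      have "24 * sp x * N - 18 * sp x^2 \<le> 24 * (4*r^2) * (4*r^2)"
      proof -
        have "sp x * N \<le> (4*r^2) * (4*r^2)" using spx N0 by (intro mult_mono) auto
        moreover have "0 \<le> sp x^2" by simp
        ultimately show ?thesis by linarith
      qed
      then have "(24 * sp x * N - 18 * sp x^2) / r^6 \<le> (24 * (4*r^2) * (4*r^2)) / r^6"
        using r by (intro divide_right_mono) auto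
      also have "\<dots> = 384 / r^2" using r by (simp add: field_simps power2_eq_square) (simp add: eval_nat_numeral)
      finally show ?thesis by (simp add: sumE)
    qed
    have "T3 x \<le> v x * v x / 2 * (384 / r^2)"
      unfolding T3_def using Ebound v0 by (intro mult_left_mono) auto
    also have "\<dots> \<le> 9/8 * y0^2 * (384 / r^2)"
      using vv r by (intro mult_right_mono) auto
    also have "\<dots> = M" by (simp add: M_def)
    finally show ?thesis .
  qed
  have contS: "measure lborel S = 64 * r^3"
  proof -
    have "measure lborel S = (\<Prod>i\<in>(Basis::(real^3) set). hi\<bullet>i - lo\<bullet>i)"
      unfolding S_def using r by (intro content_cbox) (auto simp: lo_def hi_def inner_diff_left inner_add_left)
    also have "\<dots> = (\<Prod>i\<in>(Basis::(real^3) set). 4*r)"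
      by (rule prod.cong) (auto simp: lo_def hi_def inner_diff_left inner_add_left)
    also have "\<dots> = 64 * r^3" by (simp add: eval_nat_numeral)
    finally show ?thesis .
  qed
  have "integral S T3 \<le> integral S (\<lambda>x. M)"
    by (rule integral_le[OF iT3]) (use T3le S_def in auto)
  also have "\<dots> = M * (64 * r^3)" using contS by (simp add: S_def)
  finally have I3: "integral S T3 \<le> M * (64 * r^3)" .
  have IT1: "integral S T1 \<le> 27648 * r * y0^2"
  proof -
    have "integral S T1 \<le> M * (64 * r^3)" using I1 I3 T2nn by linarith
    also have "\<dots> = 27648 * r * y0^2" using r by (simp add: M_def field_simps power2_eq_square) (simp add: eval_nat_numeral)
    finally show ?thesis .
  qed
  have eta27: "27 \<le> \<eta> x" if "x \<in> ball p r" for x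
  proof -
    have "norm (x - p) < r" using that by (simp add: dist_norm norm_minus_commute)
    then have "norm (x - p)^2 < r^2" by (intro power_strict_mono) auto
    then have sp3: "3 * r^2 \<le> sp x" unfolding sp_def by linarith
    have "(3 * r^2)^3 \<le> sp x^3" using sp3 r by (intro power_mono) auto
    then have "27 * r^6 \<le> sp x^3" by (simp add: power_mult_distrib eval_nat_numeral)
    then show ?thesis using r by (simp add: \<eta>_def field_simps)
  qed
  have pv: "(\<lambda>x. U x - u0 x) = v" by (simp add: v_def)
  have main: "integral (ball p r) (grad_sq v) \<le> 1024 * r * y0^2"
  proof (cases "grad_sq v integrable_on ball p r")
    case False
    then show ?thesis using r by (simp add: not_integrable_integral)
  next
    case True
    define g where "g = (\<lambda>x. if x \<in> ball p r then grad_sq v x else 0)"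
    have ig: "g integrable_on S" unfolding g_def
      using integrable_restrict_Int[of "ball p r" "grad_sq v" S] True Int_absorb2[OF ballS] by simp
    have eqb: "integral (ball p r) (grad_sq v) = integral S g"
      unfolding g_def using integral_restrict_Int[of S "ball p r" "grad_sq v"] Int_absorb2[OF ballS] by simp
    have iT1': "(\<lambda>x. T1 x * (1/27)) integrable_on S" using iT1 by (rule integrable_on_mult_left)
    have "integral S g \<le> integral S (\<lambda>x. T1 x * (1/27))"
    proof (rule integral_le[OF ig iT1'])
      fix x assume xS: "x \<in> S"
      then have xH: "x \<in> H" using SW WH by auto
      have s0: "0 \<le> (\<Sum>i\<in>Basis. a i x * a i x)" by (intro sum_nonneg) simp
      have e0: "0 \<le> \<eta> x" by (simp add: \<eta>_def sp_def)
      show "g x \<le> T1 x * (1/27)"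
      proof (cases "x \<in> ball p r")
        case True
        have "27 * (\<Sum>i\<in>Basis. a i x * a i x) \<le> \<eta> x * (\<Sum>i\<in>Basis. a i x * a i x)"
          using eta27[OF True] s0 by (intro mult_right_mono) auto
        then show ?thesis using True by (simp add: g_def grad[OF xH] T1_def)
      next
        case False
        then show ?thesis using s0 e0 by (simp add: g_def T1_def)
      qed
    qed
    also have "\<dots> = integral S T1 * (1/27)" by (rule integral_mult_left)
    also have "\<dots> \<le> 27648 * r * y0^2 * (1/27)" using IT1 by simp
    finally show ?thesis using eqb by simp
  qed
  show ?thesis using main unfolding pv by (simp add: comp y0_def)
qed


theorem mainTheorem5:
  fixes P :: "complex poly" and u0 :: "real^3 \<Rightarrow> real" and C0 :: real
  assumes P_nz: "P \<noteq> 0"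
    and u0_sol: "smooth_solution P u0"
    and u0_bdd: "\<exists>M. \<forall>x\<in>halfspace. x $ 3 * exp (- u0 x) * cmod (poly P (zc x)) \<le> M"
    and u0_asym: "\<exists>K R0. \<forall>x\<in>halfspace. Rad x \<ge> R0 \<longrightarrow>
                    \<bar>u0 x - real (degree P) * ln (Rad x) - ln (x $ 3)\<bar> \<le> K"
    and C0_ge1: "C0 \<ge> 1"
    and C0_ge: "\<forall>x\<in>halfspace. (x $ 3)^2 * exp (-2 * u0 x) * (cmod (poly P (zc x)))^2 \<le> C0"
    and u3_sol: "smooth_solution P (u3 P u0)"
    and u3_bounds: "\<forall>x\<in>halfspace. u0 x + fC C0 (x $ 3) \<le> u3 P u0 x \<and> u3 P u0 x \<le> u0 x + x $ 3"
  shows "\<exists>C>0. \<forall>p\<in>halfspace. p $ 3 \<le> 1 \<longrightarrow> (\<forall>r. 0 < r \<and> r \<le> p $ 3 / 4 \<longrightarrow>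
           integral (ball p r) (grad_sq (\<lambda>x. u3 P u0 x - u0 x)) \<le> C * r * (p $ 3)^2)"
  proof -
  have fC0: "0 \<le> fC C0 y" if "y > 0" for y
  proof (cases "y \<le> C0")
    case True then show ?thesis by (simp add: fC_def)
  next
    case False
    have c0: "C0 > 0" using C0_ge1 by simp
    have "ln (y / C0) \<le> y / C0 - 1" using that c0 by (intro ln_le_minus_one) simp
    then have "C0 * ln (y / C0) \<le> C0 * (y / C0 - 1)" using c0 by (intro mult_left_mono) auto
    also have "\<dots> = y - C0" using c0 by (simp add: field_simps)
    finally show ?thesis using False by (simp add: fC_def)
  qed
  have bnd: "\<forall>x\<in>halfspace. u0 x \<le> u3 P u0 x \<and> u3 P u0 x \<le> u0 x + x $ 3"
  proof
    fix x assume x: "x \<in> halfspace"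
    then have "fC C0 (x $ 3) \<ge> 0" by (intro fC0) (simp add: halfspace_def)
    then show "u0 x \<le> u3 P u0 x \<and> u3 P u0 x \<le> u0 x + x $ 3" using u3_bounds x by fastforce
  qed
  show ?thesis
    by (rule exI[of _ 1024]) (auto intro: ball_est[OF u3_sol u0_sol bnd])
qed

end
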